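(* Let $M$ be a dualizable object of a symmetric monoidal category $\mathbf{C}$, let $\Delta\colon M\to M\otimes P$ and $f\colon M\to M$ be morphisms, and let $h\colon P\to P$ satisfy $(f\otimes h)\circ\Delta=\Delta\circ f$. Then $h\circ\operatorname{tr}(\Delta\circ f)=\operatorname{tr}(\Delta\circ f)$, where $\Delta\circ f$ is regarded as a morphism $I\otimes M\to M\otimes P$ and its trace with respect to $M$ is a morphism $I\to P$.
   Context: $\mathbf{C}$ is a symmetric monoidal category with tensor $\otimes$ and unit $I$; associativity and unit isomorphisms are suppressed, and $\mathfrak{s}$ denotes any instance or composite of instances of the symmetry isomorphism. An object $M$ is dualizable if there is an object $M^*$ and maps $\eta\colon I\to M\otimes M^*$ and $\varepsilon\colon M^*\otimes M\to I$ with $(\mathrm{id}_M\otimes\varepsilon)(\eta\otimes\mathrm{id}_M)=\mathrm{id}_M$ and $(\varepsilon\otimes\mathrm{id}_{M^*})(\mathrm{id}_{M^*}\otimes\eta)=\mathrm{id}_{M^*}$. For dualizable $M$ and $f\colon Q\otimes M\to M\otimes P$, the trace of $f$ with respect to $M$ is $\operatorname{tr}(f)\colon Q\to P$, the composite $Q\xrightarrow{\mathrm{id}\otimes\eta}Q\otimes M\otimes M^*\xrightarrow{f\otimes\mathrm{id}}M\otimes P\otimes M^*\xrightarrow{\mathfrak{s}}M^*\otimes M\otimes P\xrightarrow{\varepsilon\otimes\mathrm{id}}P$. *)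

theory Defs
  imports Main
begin

text \<open>Cmp g f is the composite g after f; TOb / TAr are the tensor on objects / morphisms;
  Sym A B is the symmetry A tensor B to B tensor A.
  Associativity and unit isomorphisms are suppressed (identities), as in the paper.\<close>

record ('o, 'm) smcat =
  Ob  :: "'o \<Rightarrow> bool"
  Arr :: "'m \<Rightarrow> bool"
  Dom :: "'m \<Rightarrow> 'o"
  Cod :: "'m \<Rightarrow> 'o"
  Cmp :: "'m \<Rightarrow> 'm \<Rightarrow> 'm"
  Id  :: "'o \<Rightarrow> 'm"
  TOb :: "'o \<Rightarrow> 'o \<Rightarrow> 'o"
  TAr :: "'m \<Rightarrow> 'm \<Rightarrow> 'm"
  Unit :: "'o"
  Sym :: "'o \<Rightarrow> 'o \<Rightarrow> 'm"

definition hom :: "('o, 'm, 'x) smcat_scheme \<Rightarrow> 'o \<Rightarrow> 'o \<Rightarrow> 'm set" where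
  "hom C A B = {f. Arr C f \<and> Dom C f = A \<and> Cod C f = B}"

locale strict_smc =
  fixes C :: "('o, 'm) smcat"
  assumes arr_obs: "Arr C f \<Longrightarrow> Ob C (Dom C f) \<and> Ob C (Cod C f)"
    and id_hom: "Ob C A \<Longrightarrow> Id C A \<in> hom C A A"
    and cmp_hom: "f \<in> hom C A B \<Longrightarrow> g \<in> hom C B D \<Longrightarrow> Cmp C g f \<in> hom C A D"
    and id_left: "f \<in> hom C A B \<Longrightarrow> Cmp C (Id C B) f = f"
    and id_right: "f \<in> hom C A B \<Longrightarrow> Cmp C f (Id C A) = f"
    and cmp_assoc: "f \<in> hom C A B \<Longrightarrow> g \<in> hom C B D \<Longrightarrow> k \<in> hom C D E \<Longrightarrow>
        Cmp C k (Cmp C g f) = Cmp C (Cmp C k g) f"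
    and tob_ob: "Ob C A \<Longrightarrow> Ob C B \<Longrightarrow> Ob C (TOb C A B)"
    and tar_hom: "f \<in> hom C A B \<Longrightarrow> g \<in> hom C D E \<Longrightarrow> TAr C f g \<in> hom C (TOb C A D) (TOb C B E)"
    and tar_id: "Ob C A \<Longrightarrow> Ob C B \<Longrightarrow> TAr C (Id C A) (Id C B) = Id C (TOb C A B)"
    and interchange: "f \<in> hom C A B \<Longrightarrow> g \<in> hom C B D \<Longrightarrow> f' \<in> hom C A' B' \<Longrightarrow> g' \<in> hom C B' D' \<Longrightarrow>
        TAr C (Cmp C g f) (Cmp C g' f') = Cmp C (TAr C g g') (TAr C f f')"
    and unit_ob: "Ob C (Unit C)"
    and tob_unit_left: "Ob C A \<Longrightarrow> TOb C (Unit C) A = A"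
    and tob_unit_right: "Ob C A \<Longrightarrow> TOb C A (Unit C) = A"
    and tob_assoc: "Ob C A \<Longrightarrow> Ob C B \<Longrightarrow> Ob C D \<Longrightarrow> TOb C (TOb C A B) D = TOb C A (TOb C B D)"
    and tar_unit_left: "Arr C f \<Longrightarrow> TAr C (Id C (Unit C)) f = f"
    and tar_unit_right: "Arr C f \<Longrightarrow> TAr C f (Id C (Unit C)) = f"
    and tar_assoc: "Arr C f \<Longrightarrow> Arr C g \<Longrightarrow> Arr C k \<Longrightarrow> TAr C (TAr C f g) k = TAr C f (TAr C g k)"
    and sym_hom: "Ob C A \<Longrightarrow> Ob C B \<Longrightarrow> Sym C A B \<in> hom C (TOb C A B) (TOb C B A)"
    and sym_natural: "f \<in> hom C A B \<Longrightarrow> g \<in> hom C D E \<Longrightarrow>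
        Cmp C (Sym C B E) (TAr C f g) = Cmp C (TAr C g f) (Sym C A D)"
    and sym_inv: "Ob C A \<Longrightarrow> Ob C B \<Longrightarrow> Cmp C (Sym C B A) (Sym C A B) = Id C (TOb C A B)"
    and sym_hexagon: "Ob C A \<Longrightarrow> Ob C B \<Longrightarrow> Ob C D \<Longrightarrow>
        Sym C A (TOb C B D) = Cmp C (TAr C (Id C B) (Sym C A D)) (TAr C (Sym C A B) (Id C D))"

definition dual_data :: "('o, 'm) smcat \<Rightarrow> 'o \<Rightarrow> 'o \<Rightarrow> 'm \<Rightarrow> 'm \<Rightarrow> bool" where
  "dual_data C M Ms eta eps \<longleftrightarrow>
     Ob C M \<and> Ob C Ms \<and>
     eta \<in> hom C (Unit C) (TOb C M Ms) \<and> eps \<in> hom C (TOb C Ms M) (Unit C) \<and>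
     Cmp C (TAr C (Id C M) eps) (TAr C eta (Id C M)) = Id C M \<and>
     Cmp C (TAr C eps (Id C Ms)) (TAr C (Id C Ms) eta) = Id C Ms"

definition dualizable :: "('o, 'm) smcat \<Rightarrow> 'o \<Rightarrow> bool" where
  "dualizable C M \<longleftrightarrow> (\<exists>Ms eta eps. dual_data C M Ms eta eps)"

definition trace :: "('o, 'm) smcat \<Rightarrow> 'o \<Rightarrow> 'o \<Rightarrow> 'm \<Rightarrow> 'm \<Rightarrow> 'o \<Rightarrow> 'o \<Rightarrow> 'm \<Rightarrow> 'm" where
  "trace C M Ms eta eps Q P f =
     Cmp C (TAr C eps (Id C P))
       (Cmp C (Sym C (TOb C M P) Ms)
         (Cmp C (TAr C f (Id C Ms)) (TAr C (Id C Q) eta)))"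

end

theory Submission imports Defs begin

context strict_smc begin

lemma homE: "f \<in> hom C A B \<Longrightarrow> Arr C f \<and> Dom C f = A \<and> Cod C f = B"
  by (simp add: hom_def)
lemma homI: "Arr C f \<Longrightarrow> Dom C f = A \<Longrightarrow> Cod C f = B \<Longrightarrow> f \<in> hom C A B"
  by (simp add: hom_def)

lemma ob_dom[simp]: "Arr C f \<Longrightarrow> Ob C (Dom C f)" using arr_obs by blast
lemma ob_cod[simp]: "Arr C f \<Longrightarrow> Ob C (Cod C f)" using arr_obs by blast
lemma ob_tob[simp]: "Ob C A \<Longrightarrow> Ob C B \<Longrightarrow> Ob C (TOb C A B)" by (rule tob_ob)
lemma ob_unit[simp]: "Ob C (Unit C)" by (rule unit_ob)

lemma id_props[simp]: "Ob C A \<Longrightarrow> Arr C (Id C A)" "Ob C A \<Longrightarrow> Dom C (Id C A) = A" "Ob C A \<Longrightarrow> Cod C (Id C A) = A"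
  using id_hom homE by blast+

lemma cmp_props[simp]:
  "Arr C f \<Longrightarrow> Arr C g \<Longrightarrow> Dom C g = Cod C f \<Longrightarrow> Arr C (Cmp C g f)"
  "Arr C f \<Longrightarrow> Arr C g \<Longrightarrow> Dom C g = Cod C f \<Longrightarrow> Dom C (Cmp C g f) = Dom C f"
  "Arr C f \<Longrightarrow> Arr C g \<Longrightarrow> Dom C g = Cod C f \<Longrightarrow> Cod C (Cmp C g f) = Cod C g"
proof -
  assume a: "Arr C f" "Arr C g" "Dom C g = Cod C f"
  have "Cmp C g f \<in> hom C (Dom C f) (Cod C g)"
    by (rule cmp_hom[of f _ "Cod C f"]) (use a in \<open>auto intro: homI\<close>)
  then show "Arr C (Cmp C g f)" "Dom C (Cmp C g f) = Dom C f" "Cod C (Cmp C g f) = Cod C g"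
    using homE by blast+
qed

lemma tar_props[simp]:
  "Arr C f \<Longrightarrow> Arr C g \<Longrightarrow> Arr C (TAr C f g)"
  "Arr C f \<Longrightarrow> Arr C g \<Longrightarrow> Dom C (TAr C f g) = TOb C (Dom C f) (Dom C g)"
  "Arr C f \<Longrightarrow> Arr C g \<Longrightarrow> Cod C (TAr C f g) = TOb C (Cod C f) (Cod C g)"
proof -
  assume a: "Arr C f" "Arr C g"
  have "TAr C f g \<in> hom C (TOb C (Dom C f) (Dom C g)) (TOb C (Cod C f) (Cod C g))"
    by (rule tar_hom) (use a in \<open>auto intro: homI\<close>)
  then show "Arr C (TAr C f g)" "Dom C (TAr C f g) = TOb C (Dom C f) (Dom C g)"
    "Cod C (TAr C f g) = TOb C (Cod C f) (Cod C g)"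
    using homE by blast+
qed

lemma sym_props[simp]:
  "Ob C A \<Longrightarrow> Ob C B \<Longrightarrow> Arr C (Sym C A B)"
  "Ob C A \<Longrightarrow> Ob C B \<Longrightarrow> Dom C (Sym C A B) = TOb C A B"
  "Ob C A \<Longrightarrow> Ob C B \<Longrightarrow> Cod C (Sym C A B) = TOb C B A"
  using sym_hom homE by blast+

lemma tob_simps[simp]:
  "Ob C A \<Longrightarrow> TOb C (Unit C) A = A"
  "Ob C A \<Longrightarrow> TOb C A (Unit C) = A"
  "Ob C A \<Longrightarrow> Ob C B \<Longrightarrow> Ob C D \<Longrightarrow> TOb C (TOb C A B) D = TOb C A (TOb C B D)"
  using tob_unit_left tob_unit_right tob_assoc by auto

lemma cmp_assoc'[simp]:
  "Arr C f \<Longrightarrow> Arr C g \<Longrightarrow> Arr C k \<Longrightarrow> Dom C g = Cod C f \<Longrightarrow> Dom C k = Cod C g \<Longrightarrow>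
   Cmp C (Cmp C k g) f = Cmp C k (Cmp C g f)"
  by (rule cmp_assoc[symmetric, of f _ "Cod C f" g "Cod C g"]) (auto intro: homI)

lemma id_l[simp]: "Arr C f \<Longrightarrow> Cod C f = B \<Longrightarrow> Cmp C (Id C B) f = f"
  by (rule id_left[of f "Dom C f"]) (auto intro: homI)
lemma id_r[simp]: "Arr C f \<Longrightarrow> Dom C f = A \<Longrightarrow> Cmp C f (Id C A) = f"
  by (rule id_right[of f _ "Cod C f"]) (auto intro: homI)

lemma tar_simps[simp]:
  "Arr C f \<Longrightarrow> TAr C (Id C (Unit C)) f = f"
  "Arr C f \<Longrightarrow> TAr C f (Id C (Unit C)) = f"
  "Arr C f \<Longrightarrow> Arr C g \<Longrightarrow> Arr C k \<Longrightarrow> TAr C (TAr C f g) k = TAr C f (TAr C g k)"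
  "Ob C A \<Longrightarrow> Ob C B \<Longrightarrow> TAr C (Id C A) (Id C B) = Id C (TOb C A B)"
  using tar_unit_left tar_unit_right tar_assoc tar_id by auto

lemma tar_id_merge: "Ob C A \<Longrightarrow> Ob C B \<Longrightarrow> Arr C h \<Longrightarrow>
  TAr C (Id C A) (TAr C (Id C B) h) = TAr C (Id C (TOb C A B)) h"
  by (metis id_props(1) tar_simps(3,4))

lemma inter:
  "Arr C f \<Longrightarrow> Arr C g \<Longrightarrow> Arr C f' \<Longrightarrow> Arr C g' \<Longrightarrow> Dom C g = Cod C f \<Longrightarrow> Dom C g' = Cod C f' \<Longrightarrow>
   Cmp C (TAr C g g') (TAr C f f') = TAr C (Cmp C g f) (Cmp C g' f')"
  by (rule interchange[symmetric, of f _ "Cod C f" g _ f' _ "Cod C f'" g' ]) (auto intro: homI)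

lemma inter2:
  "Arr C f \<Longrightarrow> Arr C g \<Longrightarrow> Arr C f' \<Longrightarrow> Arr C g' \<Longrightarrow> Dom C g = Cod C f \<Longrightarrow> Dom C g' = Cod C f' \<Longrightarrow>
   Arr C r \<Longrightarrow> Cod C r = TOb C (Dom C f) (Dom C f') \<Longrightarrow>
   Cmp C (TAr C g g') (Cmp C (TAr C f f') r) = Cmp C (TAr C (Cmp C g f) (Cmp C g' f')) r"
  by (subst inter[symmetric]; simp)

lemma symnat:
  "Arr C f \<Longrightarrow> Arr C g \<Longrightarrow> Cmp C (Sym C (Cod C f) (Cod C g)) (TAr C f g) = Cmp C (TAr C g f) (Sym C (Dom C f) (Dom C g))"
  by (rule sym_natural) (auto intro: homI)


lemma tar_cmp_idr: "Arr C a \<Longrightarrow> Arr C b \<Longrightarrow> Dom C a = Cod C b \<Longrightarrow> Ob C D \<Longrightarrow>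
  TAr C (Cmp C a b) (Id C D) = Cmp C (TAr C a (Id C D)) (TAr C b (Id C D))"
  by (subst inter) auto
lemma tar_cmp_idl: "Arr C a \<Longrightarrow> Arr C b \<Longrightarrow> Dom C a = Cod C b \<Longrightarrow> Ob C D \<Longrightarrow>
  TAr C (Id C D) (Cmp C a b) = Cmp C (TAr C (Id C D) a) (TAr C (Id C D) b)"
  by (subst inter) auto
lemma swapA: "Arr C a \<Longrightarrow> Arr C b \<Longrightarrow> TAr C a b = Cmp C (TAr C (Id C (Cod C a)) b) (TAr C a (Id C (Dom C b)))"
  by (subst inter) auto
lemma swapB: "Arr C a \<Longrightarrow> Arr C b \<Longrightarrow> TAr C a b = Cmp C (TAr C a (Id C (Cod C b))) (TAr C (Id C (Dom C a)) b)"
  by (subst inter) auto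
end

locale dctx = strict_smc +
  fixes M Ms eta eps
  assumes dd: "dual_data C M Ms eta eps"
begin

lemma dfacts[simp]: "Ob C M" "Ob C Ms" "Arr C eta" "Dom C eta = Unit C" "Cod C eta = TOb C M Ms"
  "Arr C eps" "Dom C eps = TOb C Ms M" "Cod C eps = Unit C"
  using dd unfolding dual_data_def hom_def by auto

lemma zig1: "Cmp C (TAr C (Id C M) eps) (TAr C eta (Id C M)) = Id C M"
  and zig2: "Cmp C (TAr C eps (Id C Ms)) (TAr C (Id C Ms) eta) = Id C Ms"
  using dd unfolding dual_data_def by auto

definition fs where "fs f = Cmp C (TAr C eps (Id C Ms)) (Cmp C (TAr C (Id C Ms) (TAr C f (Id C Ms))) (TAr C (Id C Ms) eta))"

lemma fs_props[simp]: "Arr C f \<Longrightarrow> Dom C f = M \<Longrightarrow> Cod C f = M \<Longrightarrow> Arr C (fs f) \<and> Dom C (fs f) = Ms \<and> Cod C (fs f) = Ms"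
  unfolding fs_def by simp

lemma epsteps: "Cmp C eps (TAr C eps (Id C (TOb C Ms M))) = Cmp C eps (TAr C (Id C Ms) (TAr C (Id C M) eps))"
proof -
  have "TAr C eps eps = Cmp C eps (TAr C eps (Id C (TOb C Ms M)))" by (subst swapA) auto
  moreover have "TAr C eps eps = Cmp C eps (TAr C (Id C (TOb C Ms M)) eps)" by (subst swapB) auto
  ultimately show ?thesis by (simp add: tar_id_merge)
qed

lemma mate1: assumes f: "Arr C f" "Dom C f = M" "Cod C f = M"
  shows "Cmp C eps (TAr C (fs f) (Id C M)) = Cmp C eps (TAr C (Id C Ms) f)"
proof -
  have e1: "Cmp C (TAr C (Id C M) eps) (TAr C f (Id C (TOb C Ms M))) = Cmp C f (TAr C (Id C M) eps)"
    using f by (simp add: inter) (subst swapB, auto)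
  have inner: "Cmp C (TAr C (Id C M) eps) (Cmp C (TAr C f (Id C (TOb C Ms M))) (TAr C eta (Id C M))) = f"
  proof -
    have "Cmp C (TAr C (Id C M) eps) (Cmp C (TAr C f (Id C (TOb C Ms M))) (TAr C eta (Id C M)))
       = Cmp C (Cmp C (TAr C (Id C M) eps) (TAr C f (Id C (TOb C Ms M)))) (TAr C eta (Id C M))"
      using f by simp
    also have "\<dots> = f" unfolding e1 using f zig1 by simp
    finally show ?thesis .
  qed
  have "TAr C (fs f) (Id C M) = Cmp C (TAr C eps (Id C (TOb C Ms M)))
     (Cmp C (TAr C (Id C Ms) (TAr C f (Id C (TOb C Ms M)))) (TAr C (Id C Ms) (TAr C eta (Id C M))))"
    unfolding fs_def using f by (simp add: tar_cmp_idr)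
  then have "Cmp C eps (TAr C (fs f) (Id C M)) = Cmp C eps (Cmp C (TAr C (Id C Ms) (TAr C (Id C M) eps))
     (Cmp C (TAr C (Id C Ms) (TAr C f (Id C (TOb C Ms M)))) (TAr C (Id C Ms) (TAr C eta (Id C M)))))"
    using f epsteps by (simp flip: cmp_assoc')
  also have "\<dots> = Cmp C eps (TAr C (Id C Ms) (Cmp C (TAr C (Id C M) eps) (Cmp C (TAr C f (Id C (TOb C Ms M))) (TAr C eta (Id C M)))))"
    using f by (simp add: tar_cmp_idl)
  also have "\<dots> = Cmp C eps (TAr C (Id C Ms) f)" unfolding inner ..
  finally show ?thesis .
qed

lemma mate2: assumes f: "Arr C f" "Dom C f = M" "Cod C f = M"
  shows "Cmp C (TAr C (Id C M) (fs f)) eta = Cmp C (TAr C f (Id C Ms)) eta"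
proof -
  have z: "Cmp C (TAr C (Id C M) (TAr C eps (Id C Ms))) (TAr C eta (Id C (TOb C M Ms))) = Id C (TOb C M Ms)"
  proof -
    have "TAr C (Cmp C (TAr C (Id C M) eps) (TAr C eta (Id C M))) (Id C Ms) = Id C (TOb C M Ms)"
      by (simp add: zig1)
    thus ?thesis by (simp add: tar_cmp_idr)
  qed
  have ee: "Cmp C (TAr C (Id C (TOb C M Ms)) eta) eta = Cmp C (TAr C eta (Id C (TOb C M Ms))) eta"
  proof -
    have "TAr C eta eta = Cmp C (TAr C (Id C (TOb C M Ms)) eta) eta" by (subst swapA) auto
    moreover have "TAr C eta eta = Cmp C (TAr C eta (Id C (TOb C M Ms))) eta" by (subst swapB) auto
    ultimately show ?thesis by simp
  qed
  have ef: "Cmp C (TAr C (Id C (TOb C M Ms)) (TAr C f (Id C Ms))) (TAr C eta (Id C (TOb C M Ms)))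
      = Cmp C (TAr C eta (Id C (TOb C M Ms))) (TAr C f (Id C Ms))"
  proof -
    have "Cmp C (TAr C (Id C (TOb C M Ms)) (TAr C f (Id C Ms))) (TAr C eta (Id C (TOb C M Ms))) = TAr C eta (TAr C f (Id C Ms))"
      using f by (simp add: inter)
    moreover have "TAr C eta (TAr C f (Id C Ms)) = Cmp C (TAr C eta (Id C (TOb C M Ms))) (TAr C f (Id C Ms))"
      using f by (subst swapB) auto
    ultimately show ?thesis by simp
  qed
  have "Cmp C (TAr C (Id C M) (fs f)) eta = Cmp C (TAr C (Id C M) (TAr C eps (Id C Ms)))
     (Cmp C (TAr C (Id C (TOb C M Ms)) (TAr C f (Id C Ms))) (Cmp C (TAr C (Id C (TOb C M Ms)) eta) eta))"
    unfolding fs_def using f by (simp add: tar_cmp_idl tar_id_merge)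
  also have "\<dots> = Cmp C (TAr C (Id C M) (TAr C eps (Id C Ms)))
     (Cmp C (TAr C (Id C (TOb C M Ms)) (TAr C f (Id C Ms))) (Cmp C (TAr C eta (Id C (TOb C M Ms))) eta))"
    unfolding ee ..
  also have "\<dots> = Cmp C (TAr C (Id C M) (TAr C eps (Id C Ms)))
     (Cmp C (Cmp C (TAr C (Id C (TOb C M Ms)) (TAr C f (Id C Ms))) (TAr C eta (Id C (TOb C M Ms)))) eta)"
    using f by simp
  also have "\<dots> = Cmp C (TAr C (Id C M) (TAr C eps (Id C Ms)))
     (Cmp C (Cmp C (TAr C eta (Id C (TOb C M Ms))) (TAr C f (Id C Ms))) eta)"
    unfolding ef ..
  also have "\<dots> = Cmp C (Cmp C (TAr C (Id C M) (TAr C eps (Id C Ms))) (TAr C eta (Id C (TOb C M Ms))))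
     (Cmp C (TAr C f (Id C Ms)) eta)"
    using f by simp
  also have "\<dots> = Cmp C (TAr C f (Id C Ms)) eta" unfolding z using f by simp
  finally show ?thesis .
qed

lemma claimA: assumes P: "Ob C P" and g: "Arr C g" "Dom C g = M" "Cod C g = TOb C M P"
  and h: "Arr C h" "Dom C h = P" "Cod C h = P"
  shows "Cmp C h (trace C M Ms eta eps (Unit C) P g) = trace C M Ms eta eps (Unit C) P (Cmp C (TAr C (Id C M) h) g)"
proof -
  let ?E = "TAr C eps (Id C P)" and ?S = "Sym C (TOb C M P) Ms" and ?G = "TAr C g (Id C Ms)"
  let ?H1 = "TAr C (Id C (TOb C Ms M)) h" and ?H2 = "TAr C (TAr C (Id C M) h) (Id C Ms)"
  have s1: "Cmp C h ?E = Cmp C ?E ?H1"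
  proof -
    have "TAr C eps h = Cmp C h ?E" using h P by (subst swapA) auto
    moreover have "TAr C eps h = Cmp C ?E ?H1" using h P by (subst swapB) auto
    ultimately show ?thesis by simp
  qed
  have s2: "Cmp C ?H1 ?S = Cmp C ?S ?H2"
    using symnat[of "TAr C (Id C M) h" "Id C Ms"] h P by (simp add: tar_id_merge)
  have s3: "Cmp C ?H2 ?G = TAr C (Cmp C (TAr C (Id C M) h) g) (Id C Ms)"
    by (rule tar_cmp_idr[symmetric]) (use h g P in simp_all)
  have "Cmp C h (trace C M Ms eta eps (Unit C) P g) = Cmp C (Cmp C h ?E) (Cmp C ?S (Cmp C ?G eta))"
    unfolding trace_def using h g P by simp
  also have "\<dots> = Cmp C (Cmp C ?E ?H1) (Cmp C ?S (Cmp C ?G eta))" unfolding s1 ..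
  also have "\<dots> = Cmp C ?E (Cmp C (Cmp C ?H1 ?S) (Cmp C ?G eta))" using h g P by simp
  also have "\<dots> = Cmp C ?E (Cmp C (Cmp C ?S ?H2) (Cmp C ?G eta))" unfolding s2 ..
  also have "\<dots> = Cmp C ?E (Cmp C ?S (Cmp C (Cmp C ?H2 ?G) eta))" using h g P by simp
  also have "\<dots> = Cmp C ?E (Cmp C ?S (Cmp C (TAr C (Cmp C (TAr C (Id C M) h) g) (Id C Ms)) eta))" unfolding s3 ..
  also have "\<dots> = trace C M Ms eta eps (Unit C) P (Cmp C (TAr C (Id C M) h) g)"
    unfolding trace_def using h g P by simp
  finally show ?thesis .
qed

lemma claimB: assumes P: "Ob C P" and D: "Arr C D" "Dom C D = M" "Cod C D = TOb C M P"
  and f: "Arr C f" "Dom C f = M" "Cod C f = M"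
  shows "trace C M Ms eta eps (Unit C) P (Cmp C D f) = trace C M Ms eta eps (Unit C) P (Cmp C (TAr C f (Id C P)) D)"
proof -
  let ?E = "TAr C eps (Id C P)" and ?S = "Sym C (TOb C M P) Ms" and ?F = "fs f"
  have F: "Arr C ?F" "Dom C ?F = Ms" "Cod C ?F = Ms" using fs_props f by auto
  have b1: "Cmp C (TAr C (Cmp C D f) (Id C Ms)) eta = Cmp C (TAr C D (Id C Ms)) (Cmp C (TAr C (Id C M) ?F) eta)"
  proof -
    have "Cmp C (TAr C (Cmp C D f) (Id C Ms)) eta = Cmp C (TAr C D (Id C Ms)) (Cmp C (TAr C f (Id C Ms)) eta)"
      using D f by (simp add: tar_cmp_idr)
    then show ?thesis using mate2[OF f] by simp
  qed
  have b2: "Cmp C (TAr C D (Id C Ms)) (TAr C (Id C M) ?F) = Cmp C (TAr C (Id C (TOb C M P)) ?F) (TAr C D (Id C Ms))"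
  proof -
    have "TAr C D ?F = Cmp C (TAr C (Id C (TOb C M P)) ?F) (TAr C D (Id C Ms))" using D F by (subst swapA) auto
    moreover have "TAr C D ?F = Cmp C (TAr C D (Id C Ms)) (TAr C (Id C M) ?F)" using D F by (subst swapB) auto
    ultimately show ?thesis by simp
  qed
  have b3: "Cmp C ?S (TAr C (Id C (TOb C M P)) ?F) = Cmp C (TAr C ?F (Id C (TOb C M P))) ?S"
    using symnat[of "Id C (TOb C M P)" ?F] F P by simp
  have b4: "Cmp C ?E (TAr C ?F (Id C (TOb C M P))) = Cmp C ?E (TAr C (Id C Ms) (TAr C f (Id C P)))"
  proof -
    have "Cmp C ?E (TAr C ?F (Id C (TOb C M P))) = TAr C (Cmp C eps (TAr C ?F (Id C M))) (Id C P)"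
      using F P by (simp add: tar_cmp_idr)
    also have "\<dots> = TAr C (Cmp C eps (TAr C (Id C Ms) f)) (Id C P)" using mate1[OF f] by simp
    also have "\<dots> = Cmp C ?E (TAr C (Id C Ms) (TAr C f (Id C P)))"
      using f P by (simp add: tar_cmp_idr)
    finally show ?thesis .
  qed
  have b5: "Cmp C (TAr C (Id C Ms) (TAr C f (Id C P))) ?S = Cmp C ?S (TAr C (TAr C f (Id C P)) (Id C Ms))"
    using symnat[of "TAr C f (Id C P)" "Id C Ms"] f P by simp
  have b6: "Cmp C (TAr C (TAr C f (Id C P)) (Id C Ms)) (TAr C D (Id C Ms)) = TAr C (Cmp C (TAr C f (Id C P)) D) (Id C Ms)"
    by (rule tar_cmp_idr[symmetric]) (use f D P in simp_all)
  have "trace C M Ms eta eps (Unit C) P (Cmp C D f) = Cmp C ?E (Cmp C ?S (Cmp C (TAr C (Cmp C D f) (Id C Ms)) eta))"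
    unfolding trace_def using D f P by simp
  also have "\<dots> = Cmp C ?E (Cmp C ?S (Cmp C (TAr C D (Id C Ms)) (Cmp C (TAr C (Id C M) ?F) eta)))" unfolding b1 ..
  also have "\<dots> = Cmp C ?E (Cmp C ?S (Cmp C (Cmp C (TAr C D (Id C Ms)) (TAr C (Id C M) ?F)) eta))"
    using D F P by simp
  also have "\<dots> = Cmp C ?E (Cmp C ?S (Cmp C (Cmp C (TAr C (Id C (TOb C M P)) ?F) (TAr C D (Id C Ms))) eta))"
    unfolding b2 ..
  also have "\<dots> = Cmp C ?E (Cmp C (Cmp C ?S (TAr C (Id C (TOb C M P)) ?F)) (Cmp C (TAr C D (Id C Ms)) eta))"
    using D F P by simp
  also have "\<dots> = Cmp C ?E (Cmp C (Cmp C (TAr C ?F (Id C (TOb C M P))) ?S) (Cmp C (TAr C D (Id C Ms)) eta))"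
    unfolding b3 ..
  also have "\<dots> = Cmp C (Cmp C ?E (TAr C ?F (Id C (TOb C M P)))) (Cmp C ?S (Cmp C (TAr C D (Id C Ms)) eta))"
    using D F P by simp
  also have "\<dots> = Cmp C (Cmp C ?E (TAr C (Id C Ms) (TAr C f (Id C P)))) (Cmp C ?S (Cmp C (TAr C D (Id C Ms)) eta))"
    unfolding b4 ..
  also have "\<dots> = Cmp C ?E (Cmp C (Cmp C (TAr C (Id C Ms) (TAr C f (Id C P))) ?S) (Cmp C (TAr C D (Id C Ms)) eta))"
    using D f P by simp
  also have "\<dots> = Cmp C ?E (Cmp C (Cmp C ?S (TAr C (TAr C f (Id C P)) (Id C Ms))) (Cmp C (TAr C D (Id C Ms)) eta))"
    unfolding b5 ..
  also have "\<dots> = Cmp C ?E (Cmp C ?S (Cmp C (Cmp C (TAr C (TAr C f (Id C P)) (Id C Ms)) (TAr C D (Id C Ms))) eta))"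
    using D f P by simp
  also have "\<dots> = Cmp C ?E (Cmp C ?S (Cmp C (TAr C (Cmp C (TAr C f (Id C P)) D) (Id C Ms)) eta))"
    unfolding b6 ..
  also have "\<dots> = trace C M Ms eta eps (Unit C) P (Cmp C (TAr C f (Id C P)) D)"
    unfolding trace_def using D f P by simp
  finally show ?thesis .
qed

end

theorem mainTheorem5:
  fixes C :: "('o, 'm) smcat"
  assumes "strict_smc C"
    and "dual_data C M Ms eta eps"
    and "Ob C P"
    and "Delta \<in> hom C M (TOb C M P)"
    and "f \<in> hom C M M"
    and "h \<in> hom C P P"
    and "Cmp C (TAr C f h) Delta = Cmp C Delta f"
  shows "Cmp C h (trace C M Ms eta eps (Unit C) P (Cmp C Delta f))
           = trace C M Ms eta eps (Unit C) P (Cmp C Delta f)"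
proof -
  interpret dctx C M Ms eta eps using assms(1,2) by (simp add: dctx_def dctx_axioms_def)
  have D: "Arr C Delta" "Dom C Delta = M" "Cod C Delta = TOb C M P" using assms(4) by (auto simp: hom_def)
  have f: "Arr C f" "Dom C f = M" "Cod C f = M" using assms(5) by (auto simp: hom_def)
  have h: "Arr C h" "Dom C h = P" "Cod C h = P" using assms(6) by (auto simp: hom_def)
  note P = assms(3)
  have k: "Cmp C (TAr C (Id C M) h) (Cmp C (TAr C f (Id C P)) Delta) = Cmp C Delta f"
  proof -
    have "Cmp C (TAr C (Id C M) h) (Cmp C (TAr C f (Id C P)) Delta) = Cmp C (Cmp C (TAr C (Id C M) h) (TAr C f (Id C P))) Delta"
      using D f h P by simp
    also have "\<dots> = Cmp C (TAr C f h) Delta" using D f h P by (simp add: inter)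
    finally show ?thesis using assms(7) by simp
  qed
  have "Cmp C h (trace C M Ms eta eps (Unit C) P (Cmp C Delta f))
      = Cmp C h (trace C M Ms eta eps (Unit C) P (Cmp C (TAr C f (Id C P)) Delta))"
    using claimB[OF P D f] by simp
  also have "\<dots> = trace C M Ms eta eps (Unit C) P (Cmp C (TAr C (Id C M) h) (Cmp C (TAr C f (Id C P)) Delta))"
    by (rule claimA) (use P D f h in simp_all)
  also have "\<dots> = trace C M Ms eta eps (Unit C) P (Cmp C Delta f)" unfolding k ..
  finally show ?thesis .
qed

end
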